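(* For every $k$-uniform hypergraph $H=(V,E)$ on $n$ vertices, $\mathrm{mms}(H)=\mu(H)$.
   Context: For $w:V\to\mathbb R$ and $X\subseteq V$ write $w(X)=\sum_{x\in X}w(x)$. Define $\mathrm{mms}(H)=\min\{|\{e\in E: w(e)\ge 0\}| : w:V\to\mathbb R,\ w(V)\ge 0\}$. A fractional cover of a hypergraph $(V,F)$ is a function $f:V\to[0,\infty)$ with $f(e)\ge 1$ for every $e\in F$; $\tau^*$ is the minimum of $f(V)$ over fractional covers, and $\nu^*$ is the fractional matching number (which equals $\tau^*$ by LP duality). For $E'\subseteq E$ let $H-E'=(V,E\setminus E')$. Define $\mu(H)=\min\{|E'|: E'\subseteq E,\ \nu^*(H-E')=\tau^*(H-E')<n/k\}$. *)

theory Defs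
  imports Complex_Main
begin

definition k_uniform_hypergraph :: "nat \<Rightarrow> 'a set \<Rightarrow> 'a set set \<Rightarrow> bool" where
  "k_uniform_hypergraph k V E \<longleftrightarrow> finite V \<and> (\<forall>e\<in>E. e \<subseteq> V \<and> card e = k)"

definition mms :: "'a set \<Rightarrow> 'a set set \<Rightarrow> nat" where
  "mms V E = Inf {card {e\<in>E. sum w e \<ge> 0} | w :: 'a \<Rightarrow> real. sum w V \<ge> 0}"

definition fractional_cover :: "'a set \<Rightarrow> 'a set set \<Rightarrow> ('a \<Rightarrow> real) \<Rightarrow> bool" where
  "fractional_cover V F f \<longleftrightarrow> (\<forall>v\<in>V. f v \<ge> 0) \<and> (\<forall>e\<in>F. sum f e \<ge> 1)"

definition tau_star :: "'a set \<Rightarrow> 'a set set \<Rightarrow> real" where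
  "tau_star V F = Inf {sum f V | f. fractional_cover V F f}"

definition fractional_matching :: "'a set \<Rightarrow> 'a set set \<Rightarrow> ('a set \<Rightarrow> real) \<Rightarrow> bool" where
  "fractional_matching V F g \<longleftrightarrow> (\<forall>e\<in>F. g e \<ge> 0) \<and> (\<forall>v\<in>V. (\<Sum>e\<in>{e\<in>F. v \<in> e}. g e) \<le> 1)"

definition nu_star :: "'a set \<Rightarrow> 'a set set \<Rightarrow> real" where
  "nu_star V F = Sup {sum g F | g. fractional_matching V F g}"

definition mu :: "nat \<Rightarrow> 'a set \<Rightarrow> 'a set set \<Rightarrow> nat" where
  "mu k V E = Inf {card E' | E'. E' \<subseteq> E \<and> nu_star V (E - E') = tau_star V (E - E')
                       \<and> tau_star V (E - E') < real (card V) / real k}"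

end

theory Submission
  imports Defs
begin


definition fm_sat :: "'b set \<Rightarrow> (('b \<Rightarrow> real) \<times> real) set \<Rightarrow> ('b \<Rightarrow> real) \<Rightarrow> bool" where
 "fm_sat X C x \<longleftrightarrow> (\<forall>c\<in>C. snd c \<le> (\<Sum>w\<in>X. fst c w * x w))"

definition fm_cert :: "'b set \<Rightarrow> (('b \<Rightarrow> real) \<times> real) set \<Rightarrow> ((('b \<Rightarrow> real) \<times> real) \<Rightarrow> real) \<Rightarrow> bool" where
 "fm_cert X C l \<longleftrightarrow> (\<forall>c\<in>C. 0 \<le> l c) \<and> (\<forall>w\<in>X. (\<Sum>c\<in>C. l c * fst c w) = 0) \<and> 0 < (\<Sum>c\<in>C. l c * snd c)"

lemma swap_lemma:
  fixes a :: "'d \<Rightarrow> real"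
  shows "(\<Sum>c\<in>C. (\<Sum>d\<in>D. a d * r d c) * G c) = (\<Sum>d\<in>D. a d * (\<Sum>c\<in>C. r d c * G c))"
proof -
  have "(\<Sum>c\<in>C. (\<Sum>d\<in>D. a d * r d c) * G c) = (\<Sum>c\<in>C. \<Sum>d\<in>D. a d * (r d c * G c))"
    by (simp add: sum_distrib_right mult.assoc)
  also have "\<dots> = (\<Sum>d\<in>D. \<Sum>c\<in>C. a d * (r d c * G c))"
    by (rule sum.swap)
  also have "\<dots> = (\<Sum>d\<in>D. a d * (\<Sum>c\<in>C. r d c * G c))"
    by (simp add: sum_distrib_left)
  finally show ?thesis .
qed

lemma cert_lift:
  assumes rep: "\<forall>d\<in>C'. \<exists>\<rho>. (\<forall>c\<in>C. 0 \<le> \<rho> c) \<and> (\<forall>w. fst d w = (\<Sum>c\<in>C. \<rho> c * fst c w)) \<and> snd d = (\<Sum>c\<in>C. \<rho> c * snd c)"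
    and cert: "fm_cert X0 C' l'"
    and cov: "\<forall>w\<in>X. w \<in> X0 \<or> (\<forall>d\<in>C'. fst d w = 0)"
  shows "\<exists>l. fm_cert X C l"
proof -
  from rep obtain \<rho> where \<rho>: "\<forall>d\<in>C'. (\<forall>c\<in>C. 0 \<le> \<rho> d c) \<and> (\<forall>w. fst d w = (\<Sum>c\<in>C. \<rho> d c * fst c w)) \<and> snd d = (\<Sum>c\<in>C. \<rho> d c * snd c)"
    using bchoice[OF rep] by blast
  define l where "l c = (\<Sum>d\<in>C'. l' d * \<rho> d c)" for c
  have gen: "(\<Sum>c\<in>C. l c * G c) = (\<Sum>d\<in>C'. l' d * (\<Sum>c\<in>C. \<rho> d c * G c))" for G
    unfolding l_def by (rule swap_lemma)
  have "fm_cert X C l"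
    unfolding fm_cert_def
  proof (intro conjI ballI)
    fix c assume "c \<in> C"
    then show "0 \<le> l c" unfolding l_def using \<rho> cert unfolding fm_cert_def
      by (intro sum_nonneg mult_nonneg_nonneg) auto
  next
    fix w assume w: "w \<in> X"
    have "(\<Sum>c\<in>C. l c * fst c w) = (\<Sum>d\<in>C'. l' d * fst d w)"
      unfolding gen using \<rho> by (intro sum.cong) auto
    also have "\<dots> = 0"
      using cov w cert unfolding fm_cert_def by auto
    finally show "(\<Sum>c\<in>C. l c * fst c w) = 0" .
  next
    have "(\<Sum>c\<in>C. l c * snd c) = (\<Sum>d\<in>C'. l' d * snd d)"
      unfolding gen using \<rho> by (intro sum.cong) auto
    then show "0 < (\<Sum>c\<in>C. l c * snd c)" using cert unfolding fm_cert_def by simp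
  qed
  then show ?thesis by blast
qed

lemma two_point_sum:
  fixes G :: "'c \<Rightarrow> real"
  assumes "finite C" "p \<in> C" "n \<in> C" "p \<noteq> n"
  shows "(\<Sum>c\<in>C. (if c = p then a else if c = n then b else 0) * G c) = a * G p + b * G n"
proof -
  have "(\<Sum>c\<in>C. (if c = p then a else if c = n then b else 0) * G c)
      = (\<Sum>c\<in>C. (if c = p then a * G p else 0) + (if c = n then b * G n else 0))"
    using assms by (intro sum.cong) auto
  also have "\<dots> = a * G p + b * G n"
    using assms by (simp add: sum.distrib)
  finally show ?thesis .
qed

lemma one_point_sum:
  fixes G :: "'c \<Rightarrow> real"
  assumes "finite C" "p \<in> C"
  shows "(\<Sum>c\<in>C. (if c = p then 1 else 0) * G c) = G p"
proof -
  have "(\<Sum>c\<in>C. (if c = p then 1 else 0) * G c) = (\<Sum>c\<in>C. if c = p then G p else 0)"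
    by (intro sum.cong) auto
  then show ?thesis using assms by simp
qed

lemma frac_key:
  fixes al be a b :: real
  assumes "a > 0" "b < 0" "- b * al + a * be \<le> 0"
  shows "al / a \<le> be / b"
proof -
  have "al * b \<ge> be * a" using assms by (simp add: algebra_simps)
  then show ?thesis using assms by (simp add: divide_simps mult.commute)
qed

lemma farkas:
  "finite X \<Longrightarrow> finite C \<Longrightarrow> \<not> (\<exists>x. fm_sat X C x) \<Longrightarrow> \<exists>l. fm_cert X C l"
proof (induction X arbitrary: C rule: finite_induct)
  case empty
  then have "\<not> fm_sat {} C (\<lambda>_. 0)" by blast
  then obtain c where c: "c \<in> C" "snd c > 0" unfolding fm_sat_def by auto
  define l where "l d = (if d = c then 1 else (0::real))" for d
  have "fm_cert {} C l" unfolding fm_cert_def l_def using c empty.prems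
    by (simp add: one_point_sum)
  then show ?case by blast
next
  case (insert v X0 C)
  define P where "P = {c\<in>C. fst c v > 0}"
  define N where "N = {c\<in>C. fst c v < 0}"
  define Z where "Z = {c\<in>C. fst c v = 0}"
  define comb where "comb p n = (\<lambda>w. (- fst n v) * fst p w + fst p v * fst n w, (- fst n v) * snd p + fst p v * snd n)" for p n :: "('a \<Rightarrow> real) \<times> real"
  define C' where "C' = Z \<union> (\<lambda>(p,n). comb p n) ` (P \<times> N)"
  have finP: "finite P" "finite N" "finite Z" using insert.prems unfolding P_def N_def Z_def by auto
  have finC': "finite C'" unfolding C'_def using finP by auto
  have nosat: "\<not> (\<exists>x. fm_sat X0 C' x)"
  proof
    assume "\<exists>x. fm_sat X0 C' x"
    then obtain x where sat: "fm_sat X0 C' x" by blast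
    define s where "s c = (\<Sum>w\<in>X0. fst c w * x w)" for c :: "('a \<Rightarrow> real) \<times> real"
    define L where "L c = (snd c - s c) / fst c v" for c :: "('a \<Rightarrow> real) \<times> real"
    have key: "L p \<le> L n" if p: "p \<in> P" and n: "n \<in> N" for p n
    proof -
      have "comb p n \<in> C'" unfolding C'_def using p n by auto
      then have "snd (comb p n) \<le> (\<Sum>w\<in>X0. fst (comb p n) w * x w)"
        using sat unfolding fm_sat_def by blast
      also have "\<dots> = (\<Sum>w\<in>X0. (- fst n v) * (fst p w * x w) + fst p v * (fst n w * x w))"
        by (intro sum.cong) (simp_all add: comb_def algebra_simps)
      also have "\<dots> = (- fst n v) * s p + fst p v * s n"
        unfolding s_def by (simp only: sum.distrib sum_distrib_left[symmetric])
      finally have "- fst n v * (snd p - s p) + fst p v * (snd n - s n) \<le> 0"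
        unfolding comb_def by (simp add: algebra_simps)
      then show ?thesis unfolding L_def
        using p n unfolding P_def N_def by (intro frac_key) auto
    qed
    define t where "t = (if P = {} then (if N = {} then 0 else Min (L ` N)) else Max (L ` P))"
    have tP: "L p \<le> t" if "p \<in> P" for p
      using that finP unfolding t_def by auto
    have tN: "t \<le> L n" if "n \<in> N" for n
    proof (cases "P = {}")
      case True
      then show ?thesis using that finP unfolding t_def by auto
    next
      case False
      have "Max (L ` P) \<in> L ` P" using False finP by (intro Max_in) auto
      then obtain p where "p \<in> P" "Max (L ` P) = L p" by auto
      then show ?thesis using key[of p n] that False unfolding t_def by auto
    qed
    define x' where "x' = x(v := t)"
    have "fm_sat (insert v X0) C x'"
      unfolding fm_sat_def
    proof
      fix c assume c: "c \<in> C"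
      have "(\<Sum>w\<in>insert v X0. fst c w * x' w) = fst c v * t + s c"
        unfolding s_def x'_def using insert.hyps
        by (simp add: sum.insert) (intro sum.cong; auto)
      moreover have "snd c \<le> fst c v * t + s c"
      proof -
        consider "c \<in> P" | "c \<in> N" | "c \<in> Z" using c unfolding P_def N_def Z_def by force
        then show ?thesis
        proof cases
          case 1
          then have "fst c v > 0" unfolding P_def by auto
          moreover have "(snd c - s c) / fst c v \<le> t" using tP[OF 1] unfolding L_def .
          ultimately have "snd c - s c \<le> t * fst c v" by (simp add: pos_divide_le_eq)
          then show ?thesis by (simp add: algebra_simps)
        next
          case 2
          then have "fst c v < 0" unfolding N_def by auto
          moreover have "t \<le> (snd c - s c) / fst c v" using tN[OF 2] unfolding L_def .
          ultimately have "snd c - s c \<le> t * fst c v" by (simp add: neg_le_divide_eq)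
          then show ?thesis by (simp add: algebra_simps)
        next
          case 3
          then have "c \<in> C'" unfolding C'_def by auto
          then have "snd c \<le> s c" using sat unfolding fm_sat_def s_def by blast
          then show ?thesis using 3 unfolding Z_def by auto
        qed
      qed
      ultimately show "snd c \<le> (\<Sum>w\<in>insert v X0. fst c w * x' w)" by simp
    qed
    then show False using insert.prems by blast
  qed
  obtain l' where l': "fm_cert X0 C' l'" using insert.IH[OF finC' nosat] by blast
  have rep: "\<forall>d\<in>C'. \<exists>\<rho>. (\<forall>c\<in>C. 0 \<le> \<rho> c) \<and> (\<forall>w. fst d w = (\<Sum>c\<in>C. \<rho> c * fst c w)) \<and> snd d = (\<Sum>c\<in>C. \<rho> c * snd c)"
  proof
    fix d assume "d \<in> C'"
    then consider "d \<in> Z" | p n where "p \<in> P" "n \<in> N" "d = comb p n" unfolding C'_def by auto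
    then show "\<exists>\<rho>. (\<forall>c\<in>C. 0 \<le> \<rho> c) \<and> (\<forall>w. fst d w = (\<Sum>c\<in>C. \<rho> c * fst c w)) \<and> snd d = (\<Sum>c\<in>C. \<rho> c * snd c)"
    proof cases
      case 1
      then have "d \<in> C" unfolding Z_def by auto
      then show ?thesis using insert.prems
        by (intro exI[of _ "\<lambda>c. if c = d then 1 else 0"]) (simp add: one_point_sum)
    next
      case 2
      have pn: "p \<in> C" "n \<in> C" "fst p v > 0" "fst n v < 0" using 2 unfolding P_def N_def by auto
      then have ne: "p \<noteq> n" by auto
      define \<rho> where "\<rho> c = (if c = p then - fst n v else if c = n then fst p v else 0)" for c
      have r1: "\<forall>c\<in>C. 0 \<le> \<rho> c" unfolding \<rho>_def using pn by simp
      have r2: "\<forall>w. fst d w = (\<Sum>c\<in>C. \<rho> c * fst c w)"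
      proof
        fix w
        have "(\<Sum>c\<in>C. \<rho> c * fst c w) = - fst n v * fst p w + fst p v * fst n w"
          unfolding \<rho>_def by (rule two_point_sum[OF insert.prems(1) pn(1,2) ne])
        then show "fst d w = (\<Sum>c\<in>C. \<rho> c * fst c w)" unfolding 2(3) comb_def by simp
      qed
      have r3: "snd d = (\<Sum>c\<in>C. \<rho> c * snd c)"
      proof -
        have "(\<Sum>c\<in>C. \<rho> c * snd c) = - fst n v * snd p + fst p v * snd n"
          unfolding \<rho>_def by (rule two_point_sum[OF insert.prems(1) pn(1,2) ne])
        then show ?thesis unfolding 2(3) comb_def by simp
      qed
      show ?thesis using r1 r2 r3 by blast
    qed
  qed
  have cov: "\<forall>w\<in>insert v X0. w \<in> X0 \<or> (\<forall>d\<in>C'. fst d w = 0)"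
  proof
    fix w assume "w \<in> insert v X0"
    then consider "w \<in> X0" | "w = v" by blast
    then show "w \<in> X0 \<or> (\<forall>d\<in>C'. fst d w = 0)"
    proof cases
      case 2
      have "fst d v = 0" if "d \<in> C'" for d
      proof -
        from that consider "d \<in> Z" | p n where "d = comb p n" unfolding C'_def by auto
        then show ?thesis
        proof cases
          case 1 then show ?thesis unfolding Z_def by simp
        next
          case 2 then show ?thesis unfolding comb_def by (simp add: algebra_simps)
        qed
      qed
      then show ?thesis using 2 by simp
    qed simp
  qed
  show ?case by (rule cert_lift[OF rep l' cov])
qed



lemma farkas_idx:
  fixes A :: "'c \<Rightarrow> 'b \<Rightarrow> real" and B :: "'c \<Rightarrow> real"
  assumes fX: "finite X" and fI: "finite I"
    and ns: "\<not> (\<exists>x. \<forall>i\<in>I. B i \<le> (\<Sum>w\<in>X. A i w * x w))"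
  shows "\<exists>\<mu>. (\<forall>i\<in>I. 0 \<le> \<mu> i) \<and> (\<forall>w\<in>X. (\<Sum>i\<in>I. \<mu> i * A i w) = 0) \<and> 0 < (\<Sum>i\<in>I. \<mu> i * B i)"
proof -
  define h where "h i = (A i, B i)" for i
  define C where "C = h ` I"
  have nsC: "\<not> (\<exists>x. fm_sat X C x)"
    using ns unfolding fm_sat_def C_def h_def by auto
  have fC: "finite C" unfolding C_def using fI by simp
  from farkas[OF fX fC nsC] obtain l where l: "fm_cert X C l" ..
  define R where "R = inv_into I h ` C"
  have RI: "R \<subseteq> I" unfolding R_def C_def by (auto intro: inv_into_into)
  have hinv: "h (inv_into I h c) = c" if "c \<in> C" for c
    using that unfolding C_def by (auto intro: f_inv_into_f)
  have bij: "bij_betw h R C"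
    unfolding bij_betw_def
  proof
    show "inj_on h R"
    proof (rule inj_onI)
      fix i j assume "i \<in> R" "j \<in> R" "h i = h j"
      then obtain c d where cd: "c \<in> C" "d \<in> C" "i = inv_into I h c" "j = inv_into I h d"
        unfolding R_def by blast
      have "c = d" using \<open>h i = h j\<close> cd hinv by metis
      then show "i = j" using cd by simp
    qed
    show "h ` R = C"
    proof
      show "h ` R \<subseteq> C" unfolding R_def using hinv by auto
      show "C \<subseteq> h ` R"
      proof
        fix c assume "c \<in> C"
        then have "h (inv_into I h c) = c" "inv_into I h c \<in> R" using hinv unfolding R_def by auto
        then show "c \<in> h ` R" by (metis imageI)
      qed
    qed
  qed
  define \<mu> where "\<mu> i = (if i \<in> R then l (h i) else 0)" for i
  have gen: "(\<Sum>i\<in>I. \<mu> i * G (h i)) = (\<Sum>c\<in>C. l c * G c)" for G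
  proof -
    have "(\<Sum>i\<in>I. \<mu> i * G (h i)) = (\<Sum>i\<in>I. if i \<in> R then l (h i) * G (h i) else 0)"
      unfolding \<mu>_def by (intro sum.cong) auto
    also have "\<dots> = (\<Sum>i\<in>{i\<in>I. i \<in> R}. l (h i) * G (h i))"
      using fI by (simp only: sum.inter_filter)
    also have "{i\<in>I. i \<in> R} = R" using RI by blast
    also have "(\<Sum>i\<in>R. l (h i) * G (h i)) = (\<Sum>c\<in>C. l c * G c)"
      by (rule sum.reindex_bij_betw[OF bij])
    finally show ?thesis .
  qed
  have "(\<forall>i\<in>I. 0 \<le> \<mu> i)"
    using l bij unfolding fm_cert_def \<mu>_def bij_betw_def by auto
  moreover have "\<forall>w\<in>X. (\<Sum>i\<in>I. \<mu> i * A i w) = 0"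
    using gen[of "\<lambda>c. fst c w" for w] l unfolding fm_cert_def h_def by auto
  moreover have "0 < (\<Sum>i\<in>I. \<mu> i * B i)"
    using gen[of "\<lambda>c. snd c"] l unfolding fm_cert_def h_def by auto
  ultimately show ?thesis by blast
qed

lemma sum_I:
  fixes \<phi> :: "('x set + 'x option) \<Rightarrow> real"
  assumes "finite F" "finite V"
  shows "(\<Sum>i\<in>Inl ` F \<union> (Inr \<circ> Some) ` V \<union> {Inr None}. \<phi> i)
       = (\<Sum>e\<in>F. \<phi> (Inl e)) + (\<Sum>v\<in>V. \<phi> (Inr (Some v))) + \<phi> (Inr None)"
proof -
  have "(\<Sum>i\<in>Inl ` F \<union> (Inr \<circ> Some) ` V \<union> {Inr None}. \<phi> i)
      = (\<Sum>i\<in>Inl ` F \<union> (Inr \<circ> Some) ` V. \<phi> i) + \<phi> (Inr None)"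
    using assms by (subst sum.union_disjoint) auto
  also have "(\<Sum>i\<in>Inl ` F \<union> (Inr \<circ> Some) ` V. \<phi> i) = (\<Sum>i\<in>Inl ` F. \<phi> i) + (\<Sum>i\<in>(Inr \<circ> Some) ` V. \<phi> i)"
    using assms by (subst sum.union_disjoint) auto
  also have "(\<Sum>i\<in>Inl ` F. \<phi> i) = (\<Sum>e\<in>F. \<phi> (Inl e))"
    by (subst sum.reindex) (auto simp: inj_on_def)
  also have "(\<Sum>i\<in>(Inr \<circ> Some) ` V. \<phi> i) = (\<Sum>v\<in>V. \<phi> (Inr (Some v)))"
    by (subst sum.reindex) (auto simp: inj_on_def)
  finally show ?thesis .
qed

lemma sum_restrict_V:
  fixes f :: "'x \<Rightarrow> real"
  assumes "finite V" "e \<subseteq> V"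
  shows "sum f e = (\<Sum>v\<in>V. if v \<in> e then f v else 0)"
proof -
  have "e = {v\<in>V. v \<in> e}" using assms by auto
  then have "sum f e = sum f {v\<in>V. v \<in> e}" by simp
  also have "\<dots> = (\<Sum>v\<in>V. if v \<in> e then f v else 0)" using assms by (simp add: sum.inter_filter)
  finally show ?thesis .
qed

lemma weak_duality:
  assumes fV: "finite V" and fF: "finite F" and sub: "\<forall>e\<in>F. e \<subseteq> V"
    and g: "fractional_matching V F g" and f: "fractional_cover V F f"
  shows "sum g F \<le> sum f V"
proof -
  have "sum g F \<le> (\<Sum>e\<in>F. g e * sum f e)"
  proof (rule sum_mono)
    fix e assume "e \<in> F"
    then have "0 \<le> g e" "1 \<le> sum f e" using g f unfolding fractional_matching_def fractional_cover_def by auto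
    then show "g e \<le> g e * sum f e" using mult_left_mono[of 1 "sum f e" "g e"] by simp
  qed
  also have "\<dots> = (\<Sum>e\<in>F. \<Sum>v\<in>V. if v \<in> e then g e * f v else 0)"
  proof (rule sum.cong[OF refl])
    fix e assume "e \<in> F"
    then have "sum f e = (\<Sum>v\<in>V. if v \<in> e then f v else 0)" using sub by (intro sum_restrict_V[OF fV]) auto
    then have "g e * sum f e = (\<Sum>v\<in>V. g e * (if v \<in> e then f v else 0))" by (simp add: sum_distrib_left)
    also have "\<dots> = (\<Sum>v\<in>V. if v \<in> e then g e * f v else 0)" by (intro sum.cong) auto
    finally show "g e * sum f e = (\<Sum>v\<in>V. if v \<in> e then g e * f v else 0)" .
  qed
  also have "\<dots> = (\<Sum>v\<in>V. \<Sum>e\<in>F. if v \<in> e then g e * f v else 0)"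
    by (rule sum.swap)
  also have "\<dots> = (\<Sum>v\<in>V. f v * (\<Sum>e\<in>{e\<in>F. v \<in> e}. g e))"
  proof (rule sum.cong[OF refl])
    fix v
    have "(\<Sum>e\<in>F. if v \<in> e then g e * f v else 0) = (\<Sum>e\<in>{e\<in>F. v \<in> e}. g e * f v)"
      using fF by (simp only: sum.inter_filter)
    also have "\<dots> = f v * (\<Sum>e\<in>{e\<in>F. v \<in> e}. g e)" by (simp add: sum_distrib_left mult.commute)
    finally show "(\<Sum>e\<in>F. if v \<in> e then g e * f v else 0) = f v * (\<Sum>e\<in>{e\<in>F. v \<in> e}. g e)" .
  qed
  also have "\<dots> \<le> (\<Sum>v\<in>V. f v * 1)"
    using g f unfolding fractional_matching_def fractional_cover_def
    by (intro sum_mono mult_left_mono) auto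
  finally show ?thesis by simp
qed

lemma lp_duality:
  assumes fV: "finite V" and edges: "\<forall>e\<in>F. e \<subseteq> V \<and> e \<noteq> {}"
  shows "nu_star V F = tau_star V F"
proof -
  have fF: "finite F" using edges fV by (metis Pow_iff finite_Pow_iff finite_subset subsetI)
  have sub: "\<forall>e\<in>F. e \<subseteq> V" using edges by auto
  define ST where "ST = {sum f V | f. fractional_cover V F f}"
  define SN where "SN = {sum g F | g. fractional_matching V F g}"
  have cov1: "fractional_cover V F (\<lambda>_. 1)"
    unfolding fractional_cover_def
  proof (intro conjI ballI)
    fix e assume "e \<in> F"
    then have "finite e" "e \<noteq> {}" using edges fV finite_subset by auto
    then show "1 \<le> sum (\<lambda>_. 1::real) e" by (simp add: Suc_leI card_gt_0_iff)
  qed simp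
  have STne: "ST \<noteq> {}" unfolding ST_def using cov1 by blast
  have STbdd: "bdd_below ST"
    unfolding ST_def bdd_below_def fractional_cover_def by (auto intro!: exI[of _ 0] sum_nonneg)
  define \<tau> where "\<tau> = tau_star V F"
  have \<tau>: "\<tau> = Inf ST" unfolding \<tau>_def tau_star_def ST_def ..
  have \<tau>le: "\<tau> \<le> sum f V" if "fractional_cover V F f" for f
    unfolding \<tau> using that STbdd unfolding ST_def by (intro cInf_lower) auto
  have strong: "\<exists>g. fractional_matching V F g \<and> \<tau> \<le> sum g F"
  proof (rule ccontr)
    assume nex: "\<not> ?thesis"
    define I :: "('a set + 'a option) set" where "I = Inl ` F \<union> (Inr \<circ> Some) ` V \<union> {Inr None}"
    define A :: "('a set + 'a option) \<Rightarrow> 'a set \<Rightarrow> real" where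
      "A i = (case i of Inl e \<Rightarrow> (\<lambda>e'. if e' = e then 1 else 0)
                      | Inr (Some v) \<Rightarrow> (\<lambda>e. if v \<in> e then -1 else 0)
                      | Inr None \<Rightarrow> (\<lambda>_. 1))" for i
    define B :: "('a set + 'a option) \<Rightarrow> real" where
      "B i = (case i of Inl e \<Rightarrow> 0 | Inr (Some v) \<Rightarrow> -1 | Inr None \<Rightarrow> \<tau>)" for i
    have A_l: "A (Inl e') e = (if e = e' then 1 else 0)" for e e' by (simp add: A_def)
    have A_v: "A (Inr (Some v)) e = (if v \<in> e then -1 else 0)" for v e by (simp add: A_def)
    have A_n: "A (Inr None) e = 1" for e by (simp add: A_def)
    have B_l: "B (Inl e') = 0" for e' by (simp add: B_def)
    have B_v: "B (Inr (Some v)) = -1" for v by (simp add: B_def)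
    have B_n: "B (Inr None) = \<tau>" by (simp add: B_def)
    have fI: "finite I" unfolding I_def using fF fV by auto
    have ns: "\<not> (\<exists>x. \<forall>i\<in>I. B i \<le> (\<Sum>w\<in>F. A i w * x w))"
    proof
      assume "\<exists>x. \<forall>i\<in>I. B i \<le> (\<Sum>w\<in>F. A i w * x w)"
      then obtain x where x: "\<forall>i\<in>I. B i \<le> (\<Sum>w\<in>F. A i w * x w)" by blast
      have "fractional_matching V F x"
        unfolding fractional_matching_def
      proof (intro conjI ballI)
        fix e assume e: "e \<in> F"
        have "B (Inl e) \<le> (\<Sum>w\<in>F. A (Inl e) w * x w)" using x e unfolding I_def by auto
        then show "0 \<le> x e" using e fF unfolding A_def B_def by (simp add: one_point_sum)
      next
        fix v assume v: "v \<in> V"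
        have "B (Inr (Some v)) \<le> (\<Sum>w\<in>F. A (Inr (Some v)) w * x w)" using x v unfolding I_def by auto
        moreover have "(\<Sum>w\<in>F. A (Inr (Some v)) w * x w) = (\<Sum>w\<in>F. if v \<in> w then - x w else 0)"
          unfolding A_def by (intro sum.cong) auto
        ultimately have "-1 \<le> (\<Sum>w\<in>F. if v \<in> w then - x w else 0)" unfolding B_def by simp
        also have "\<dots> = - (\<Sum>w\<in>F. if v \<in> w then x w else 0)"
          by (subst sum_negf[symmetric]) (intro sum.cong; simp)
        also have "\<dots> = - (\<Sum>w\<in>{e\<in>F. v \<in> e}. x w)" using fF by (simp add: sum.inter_filter)
        finally show "(\<Sum>e\<in>{e\<in>F. v \<in> e}. x e) \<le> 1" by simp
      qed
      moreover have "B (Inr None) \<le> (\<Sum>w\<in>F. A (Inr None) w * x w)" using x unfolding I_def by auto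
      then have "\<tau> \<le> sum x F" unfolding A_def B_def by simp
      ultimately show False using nex by blast
    qed
    obtain \<mu> where \<mu>: "\<forall>i\<in>I. 0 \<le> \<mu> i" "\<forall>w\<in>F. (\<Sum>i\<in>I. \<mu> i * A i w) = 0" "0 < (\<Sum>i\<in>I. \<mu> i * B i)"
      using farkas_idx[OF fF fI ns] by blast
    define s where "s = \<mu> (Inr None)"
    define f where "f v = (if v \<in> V then \<mu> (Inr (Some v)) else 0)" for v
    have s0: "0 \<le> s" using \<mu>(1) unfolding s_def I_def by auto
    have f0: "0 \<le> f v" for v using \<mu>(1) unfolding f_def I_def by auto
    have fe: "s \<le> sum f e" if e: "e \<in> F" for e
    proof -
      have "0 = (\<Sum>i\<in>I. \<mu> i * A i e)" using \<mu>(2) e by simp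
      also have "\<dots> = (\<Sum>e'\<in>F. \<mu> (Inl e') * (if e = e' then 1 else 0)) + (\<Sum>v\<in>V. \<mu> (Inr (Some v)) * (if v \<in> e then -1 else 0)) + s"
        unfolding I_def by (subst sum_I[OF fF fV]) (simp only: A_l A_v A_n s_def mult_1_right)
      also have "(\<Sum>e'\<in>F. \<mu> (Inl e') * (if e = e' then 1 else 0)) = (\<Sum>e'\<in>F. if e = e' then \<mu> (Inl e) else 0)"
        by (intro sum.cong) auto
      also have "\<dots> = \<mu> (Inl e)"
        using e fF by simp
      also have "(\<Sum>v\<in>V. \<mu> (Inr (Some v)) * (if v \<in> e then -1 else 0)) = - (\<Sum>v\<in>V. if v \<in> e then f v else 0)"
        by (subst sum_negf[symmetric]) (intro sum.cong; simp add: f_def)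
      also have "(\<Sum>v\<in>V. if v \<in> e then f v else 0) = sum f e"
        using sum_restrict_V[OF fV, of e f] sub e by simp
      finally have "sum f e = \<mu> (Inl e) + s" by simp
      moreover have "0 \<le> \<mu> (Inl e)" using \<mu>(1) e unfolding I_def by auto
      ultimately show ?thesis by simp
    qed
    have fV': "sum f V < s * \<tau>"
    proof -
      have "0 < (\<Sum>i\<in>I. \<mu> i * B i)" by (rule \<mu>(3))
      also have "\<dots> = (\<Sum>e\<in>F. \<mu> (Inl e) * 0) + (\<Sum>v\<in>V. \<mu> (Inr (Some v)) * -1) + s * \<tau>"
        unfolding I_def by (subst sum_I[OF fF fV]) (simp only: B_l B_v B_n s_def)
      also have "(\<Sum>v\<in>V. \<mu> (Inr (Some v)) * -1) = - sum f V"
        by (simp add: f_def sum_negf[symmetric])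
      finally show ?thesis by simp
    qed
    show False
    proof (cases "s = 0")
      case True
      then have "sum f V < 0" using fV' by simp
      moreover have "0 \<le> sum f V" using f0 by (simp add: sum_nonneg)
      ultimately show False by simp
    next
      case False
      then have sp: "s > 0" using s0 by simp
      have "fractional_cover V F (\<lambda>v. f v / s)"
        unfolding fractional_cover_def
      proof (intro conjI ballI)
        fix v show "0 \<le> f v / s" using f0 sp by simp
      next
        fix e assume "e \<in> F"
        then have "s \<le> sum f e" by (rule fe)
        then show "1 \<le> (\<Sum>v\<in>e. f v / s)" using sp by (simp add: sum_divide_distrib[symmetric])
      qed
      then have "\<tau> \<le> (\<Sum>v\<in>V. f v / s)" by (rule \<tau>le)
      also have "\<dots> = sum f V / s" by (simp add: sum_divide_distrib)
      also have "\<dots> < \<tau>" using fV' sp by (simp add: divide_less_eq mult.commute)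
      finally show False by simp
    qed
  qed
  have SNne: "SN \<noteq> {}" unfolding SN_def
    using fractional_matching_def[of V F "\<lambda>_. 0"] by auto
  have SNbdd: "bdd_above SN"
    unfolding SN_def bdd_above_def using weak_duality[OF fV fF sub _ cov1] by blast
  have "nu_star V F = Sup SN" unfolding nu_star_def SN_def ..
  also have "\<dots> = \<tau>"
  proof (rule antisym)
    show "Sup SN \<le> \<tau>"
      unfolding \<tau>
    proof (rule cSup_least[OF SNne])
      fix y assume "y \<in> SN"
      then obtain g where g: "fractional_matching V F g" "y = sum g F" unfolding SN_def by blast
      show "y \<le> Inf ST"
        using g weak_duality[OF fV fF sub g(1)] STne unfolding ST_def
        by (intro cInf_greatest) auto
    qed
  next
    obtain g where g: "fractional_matching V F g" "\<tau> \<le> sum g F" using strong by blast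
    then have "sum g F \<in> SN" unfolding SN_def by blast
    then show "\<tau> \<le> Sup SN" using g(2) SNbdd by (meson cSup_upper order_trans)
  qed
  finally show ?thesis unfolding \<tau>_def .
qed



lemma nat_inf_eq:
  fixes SA SB :: "nat set"
  assumes "SA \<noteq> {}" "SB \<noteq> {}" "\<forall>a\<in>SA. \<exists>b\<in>SB. b \<le> a" "\<forall>b\<in>SB. \<exists>a\<in>SA. a \<le> b"
  shows "Inf SA = Inf SB"
proof (rule antisym)
  have "Inf SB \<in> SB" using assms(2) by (rule Inf_nat_def1)
  then obtain a where "a \<in> SA" "a \<le> Inf SB" using assms(4) by blast
  then show "Inf SA \<le> Inf SB" using cInf_lower[OF _ bdd_below_bot, of a SA] by simp
next
  have "Inf SA \<in> SA" using assms(1) by (rule Inf_nat_def1)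
  then obtain b where "b \<in> SB" "b \<le> Inf SA" using assms(3) by blast
  then show "Inf SB \<le> Inf SA" using cInf_lower[OF _ bdd_below_bot, of b SB] by simp
qed

lemma tau_le_cover:
  assumes "fractional_cover V F f"
  shows "tau_star V F \<le> sum f V"
proof -
  have "bdd_below {sum f V | f. fractional_cover V F f}"
    unfolding bdd_below_def fractional_cover_def by (auto intro!: exI[of _ 0] sum_nonneg)
  then show ?thesis unfolding tau_star_def using assms by (intro cInf_lower) auto
qed

lemma tau_less_cover:
  assumes "tau_star V F < r" "fractional_cover V F f0"
  shows "\<exists>f. fractional_cover V F f \<and> sum f V < r"
proof -
  have bdd: "bdd_below {sum f V | f. fractional_cover V F f}"
    unfolding bdd_below_def fractional_cover_def by (auto intro!: exI[of _ 0] sum_nonneg)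
  have ne: "{sum f V | f. fractional_cover V F f} \<noteq> {}" using assms(2) by blast
  from assms(1) have "Inf {sum f V | f. fractional_cover V F f} < r" unfolding tau_star_def .
  then show ?thesis using cInf_less_iff[OF ne bdd] by blast
qed

theorem theorem1:
  fixes V :: "'a set" and E :: "'a set set" and k :: nat
  assumes "k_uniform_hypergraph k V E" and "k \<ge> 1" and "V \<noteq> {}"
  shows "mms V E = mu k V E"
proof -
  have fV: "finite V" and Esub: "\<forall>e\<in>E. e \<subseteq> V" and Ecard: "\<forall>e\<in>E. card e = k"
    using assms(1) unfolding k_uniform_hypergraph_def by auto
  have fE: "finite E" using Esub fV by (metis Pow_iff finite_Pow_iff finite_subset subsetI)
  have Ene: "\<forall>e\<in>E. e \<noteq> {}" using Ecard assms(2) by auto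
  define n where "n = card V"
  have npos: "n > 0" unfolding n_def using fV assms(3) by (simp add: card_gt_0_iff)
  have kpos: "real k > 0" using assms(2) by simp
  define SA where "SA = {card {e\<in>E. sum w e \<ge> 0} | w :: 'a \<Rightarrow> real. sum w V \<ge> 0}"
  define SB where "SB = {card E' | E'. E' \<subseteq> E \<and> nu_star V (E - E') = tau_star V (E - E')
                       \<and> tau_star V (E - E') < real (card V) / real k}"
  have dual: "nu_star V (E - E') = tau_star V (E - E')" for E'
    using Esub Ene by (intro lp_duality[OF fV]) auto
  have cov1: "fractional_cover V F (\<lambda>_. 1)" if "F \<subseteq> E" for F
    unfolding fractional_cover_def
  proof (intro conjI ballI)
    fix e assume "e \<in> F"
    then have "card e = k" using that Ecard by auto
    then show "1 \<le> sum (\<lambda>_. 1::real) e" using assms(2) by simp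
  qed simp
  have AB: "\<exists>b\<in>SB. b \<le> a" if "a \<in> SA" for a
  proof -
    from that obtain w :: "'a \<Rightarrow> real" where w: "sum w V \<ge> 0" "a = card {e\<in>E. sum w e \<ge> 0}"
      unfolding SA_def by blast
    define E' where "E' = {e\<in>E. sum w e \<ge> 0}"
    define F where "F = E - E'"
    have F: "F = {e\<in>E. sum w e < 0}" unfolding F_def E'_def by auto
    have "\<exists>f. fractional_cover V F f \<and> sum f V < real n / real k"
    proof (cases "F = {}")
      case True
      then have "fractional_cover V F (\<lambda>_. 0)" unfolding fractional_cover_def by simp
      moreover have "sum (\<lambda>_. 0::real) V < real n / real k" using npos kpos by simp
      ultimately show ?thesis by blast
    next
      case False
      have fF: "finite F" using fE unfolding F by simp
      define m where "m = Max ((\<lambda>e. sum w e) ` F)"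
      have "m \<in> (\<lambda>e. sum w e) ` F" unfolding m_def using fF False by (intro Max_in) auto
      then have mneg: "m < 0" unfolding F by auto
      have mge: "sum w e \<le> m" if "e \<in> F" for e unfolding m_def using fF that by (intro Max_ge) auto
      define M where "M = Max (w ` V)"
      have Mge: "w v \<le> M" if "v \<in> V" for v unfolding M_def using fV that by (intro Max_ge) auto
      have "sum w V \<le> real (card V) * M" using Mge by (rule sum_bounded_above)
      then have "0 \<le> real n * M" using w(1) unfolding n_def by linarith
      then have M0: "0 \<le> M" using npos by (simp add: zero_le_mult_iff)
      define D where "D = real k * M - m"
      have "0 \<le> real k * M" using M0 by simp
      then have Dpos: "D > 0" unfolding D_def using mneg by linarith
      define f where "f v = (M - w v) / D" for v
      have "fractional_cover V F f"
        unfolding fractional_cover_def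
      proof (intro conjI ballI)
        fix v assume "v \<in> V" then show "0 \<le> f v" unfolding f_def using Mge Dpos by simp
      next
        fix e assume e: "e \<in> F"
        then have ce: "card e = k" using Ecard unfolding F by auto
        have "sum f e = (\<Sum>v\<in>e. M - w v) / D" unfolding f_def by (simp add: sum_divide_distrib)
        also have "\<dots> = (real k * M - sum w e) / D" using ce by (simp add: sum_subtractf)
        finally have "sum f e = (real k * M - sum w e) / D" .
        moreover have "D \<le> real k * M - sum w e" unfolding D_def using mge[OF e] by simp
        ultimately show "1 \<le> sum f e" using Dpos by simp
      qed
      moreover have "sum f V < real n / real k"
      proof -
        have "sum f V = (\<Sum>v\<in>V. M - w v) / D" unfolding f_def by (simp add: sum_divide_distrib)
        also have "\<dots> = (real n * M - sum w V) / D" unfolding n_def by (simp add: sum_subtractf)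
        also have "\<dots> \<le> real n * M / D" using w(1) Dpos by (simp add: divide_right_mono)
        also have "\<dots> < real n / real k"
        proof -
          have "real n * M * real k < real n * D"
            unfolding D_def using npos mneg by (simp add: algebra_simps mult_neg_pos)
          then show ?thesis using Dpos kpos by (simp add: divide_simps mult.commute mult.left_commute)
        qed
        finally show ?thesis .
      qed
      ultimately show ?thesis by blast
    qed
    then obtain f where f: "fractional_cover V F f" "sum f V < real n / real k" by blast
    have "tau_star V F < real (card V) / real k" using tau_le_cover[OF f(1)] f(2) unfolding n_def by simp
    then have "card E' \<in> SB" unfolding SB_def using dual[of E'] unfolding F_def E'_def by blast
    then show ?thesis unfolding w(2) E'_def by blast
  qed
  have BA: "\<exists>a\<in>SA. a \<le> b" if "b \<in> SB" for b
  proof -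
    from that obtain E' where E': "b = card E'" "E' \<subseteq> E" "tau_star V (E - E') < real n / real k"
      unfolding SB_def n_def by blast
    obtain f where f: "fractional_cover V (E - E') f" "sum f V < real n / real k"
      using tau_less_cover[OF E'(3) cov1[of "E - E'"]] by blast
    define c where "c = sum f V / real n"
    define w where "w v = c - f v" for v
    have wV: "sum w V = 0" unfolding w_def c_def n_def using npos unfolding n_def
      by (simp add: sum_subtractf)
    have kc: "real k * c < 1" unfolding c_def using f(2) npos kpos
      by (simp add: divide_simps mult.commute)
    have sub: "{e\<in>E. sum w e \<ge> 0} \<subseteq> E'"
    proof
      fix e assume e: "e \<in> {e\<in>E. sum w e \<ge> 0}"
      show "e \<in> E'"
      proof (rule ccontr)
        assume "e \<notin> E'"
        then have eF: "e \<in> E - E'" using e by auto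
        then have "1 \<le> sum f e" using f(1) unfolding fractional_cover_def by auto
        moreover have "card e = k" using eF Ecard by auto
        then have "sum w e = real k * c - sum f e" unfolding w_def by (simp add: sum_subtractf)
        ultimately have "sum w e < 0" using kc by simp
        then show False using e by simp
      qed
    qed
    have "finite E'" using E'(2) fE by (rule finite_subset)
    then have "card {e\<in>E. sum w e \<ge> 0} \<le> b" unfolding E'(1) using sub by (intro card_mono)
    moreover have "card {e\<in>E. sum w e \<ge> 0} \<in> SA" unfolding SA_def using wV by force
    ultimately show ?thesis by blast
  qed
  have SAne: "SA \<noteq> {}" unfolding SA_def by (auto intro!: exI[of _ "\<lambda>_. 0"])
  have SBne: "SB \<noteq> {}"
  proof -
    have "tau_star V (E - E) \<le> 0" using tau_le_cover[of V "E - E" "\<lambda>_. 0"] unfolding fractional_cover_def by simp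
    also have "0 < real (card V) / real k" using npos kpos unfolding n_def by simp
    finally have "card E \<in> SB" unfolding SB_def using dual[of E] by blast
    then show ?thesis by blast
  qed
  have "mms V E = Inf SA" unfolding mms_def SA_def ..
  also have "\<dots> = Inf SB" using SAne SBne AB BA by (intro nat_inf_eq) auto
  also have "\<dots> = mu k V E" unfolding mu_def SB_def ..
  finally show ?thesis .
qed

end
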